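(* Let $\mathcal{F}\subseteq\mathcal{O}$ be a normal family of objects and let $(M_p)_{p\in\mathcal{F}}$ be the Voronoi partition of $V(G)$ with respect to $\mathcal{F}$. Then for every $p\in\mathcal{F}$ and every $v\in M_p$, the unique shortest path from $v$ to $\mathrm{loc}(p)$ is entirely contained in $M_p$. In particular, $G[M_p]$ is connected.
   Context: $G$ is a connected graph with positive edge weights; $\mathrm{dist}(X,Y)$ denotes the minimum weight of a path between a vertex of $X$ and a vertex of $Y$. Each object $p\in\mathcal{O}$ has a location $\mathrm{loc}(p)$, a nonempty vertex set inducing a connected subgraph, and a radius $\mathrm{rad}(p)\ge 0$. A family $\mathcal{F}$ is normal if locations of its members are pairwise disjoint and $\mathrm{dist}(\mathrm{loc}(p_1),\mathrm{loc}(p_2))>\mathrm{rad}(p_1)-\mathrm{rad}(p_2)$ for all ordered pairs of distinct $p_1,p_2\in\mathcal{F}$. Standing assumption: all values $\mathrm{dist}(u,v)$ and $\mathrm{dist}(u,v)-\mathrm{rad}(p)$ ($u,v\in V(G)$, $p\in\mathcal{O}$) are pairwise different and shortest paths between vertices are unique. The Voronoi partition assigns $v\in V(G)$ to $M_{p_0}$ iff $\mathrm{dist}(v,\mathrm{loc}(p_0))-\mathrm{rad}(p_0)$ is the smallest among the values $\mathrm{dist}(v,\mathrm{loc}(p))-\mathrm{rad}(p)$, $p\in\mathcal{F}$. The shortest path from $v$ to $\mathrm{loc}(p)$ is the minimum-weight path from $v$ to a vertex of $\mathrm{loc}(p)$. *)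

theory Defs
  imports Complex_Main
begin

definition wgraph :: "'v set \<Rightarrow> ('v \<times> 'v) set \<Rightarrow> ('v \<Rightarrow> 'v \<Rightarrow> real) \<Rightarrow> bool" where
  "wgraph V E w \<longleftrightarrow> finite V \<and> E \<subseteq> V \<times> V \<and>
     (\<forall>u v. (u, v) \<in> E \<longrightarrow> (v, u) \<in> E \<and> u \<noteq> v \<and> w u v > 0 \<and> w u v = w v u)"

definition is_walk :: "'v set \<Rightarrow> ('v \<times> 'v) set \<Rightarrow> 'v list \<Rightarrow> bool" where
  "is_walk V E P \<longleftrightarrow> P \<noteq> [] \<and> set P \<subseteq> V \<and> (\<forall>i. Suc i < length P \<longrightarrow> (P ! i, P ! Suc i) \<in> E)"

definition walk_weight :: "('v \<Rightarrow> 'v \<Rightarrow> real) \<Rightarrow> 'v list \<Rightarrow> real" where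
  "walk_weight w P = (\<Sum>i<length P - 1. w (P ! i) (P ! Suc i))"

definition walks_between :: "'v set \<Rightarrow> ('v \<times> 'v) set \<Rightarrow> 'v set \<Rightarrow> 'v set \<Rightarrow> 'v list set" where
  "walks_between V E X Y = {P. is_walk V E P \<and> hd P \<in> X \<and> last P \<in> Y}"

definition set_dist :: "'v set \<Rightarrow> ('v \<times> 'v) set \<Rightarrow> ('v \<Rightarrow> 'v \<Rightarrow> real) \<Rightarrow> 'v set \<Rightarrow> 'v set \<Rightarrow> real" where
  "set_dist V E w X Y = Inf (walk_weight w ` walks_between V E X Y)"

abbreviation vdist :: "'v set \<Rightarrow> ('v \<times> 'v) set \<Rightarrow> ('v \<Rightarrow> 'v \<Rightarrow> real) \<Rightarrow> 'v \<Rightarrow> 'v \<Rightarrow> real" where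
  "vdist V E w u v \<equiv> set_dist V E w {u} {v}"

definition graph_connected :: "'v set \<Rightarrow> ('v \<times> 'v) set \<Rightarrow> bool" where
  "graph_connected V E \<longleftrightarrow> V \<noteq> {} \<and> (\<forall>u\<in>V. \<forall>v\<in>V. walks_between V E {u} {v} \<noteq> {})"

definition induces_connected :: "'v set \<Rightarrow> ('v \<times> 'v) set \<Rightarrow> 'v set \<Rightarrow> bool" where
  "induces_connected V E S \<longleftrightarrow> S \<noteq> {} \<and> S \<subseteq> V \<and>
     (\<forall>u\<in>S. \<forall>v\<in>S. \<exists>P. is_walk V E P \<and> hd P = u \<and> last P = v \<and> set P \<subseteq> S)"

definition normal_family :: "'v set \<Rightarrow> ('v \<times> 'v) set \<Rightarrow> ('v \<Rightarrow> 'v \<Rightarrow> real) \<Rightarrow>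
    ('o \<Rightarrow> 'v set) \<Rightarrow> ('o \<Rightarrow> real) \<Rightarrow> 'o set \<Rightarrow> bool" where
  "normal_family V E w loc rad F \<longleftrightarrow>
     (\<forall>p1\<in>F. \<forall>p2\<in>F. p1 \<noteq> p2 \<longrightarrow> loc p1 \<inter> loc p2 = {} \<and>
        set_dist V E w (loc p1) (loc p2) > rad p1 - rad p2)"

definition voronoi_cell :: "'v set \<Rightarrow> ('v \<times> 'v) set \<Rightarrow> ('v \<Rightarrow> 'v \<Rightarrow> real) \<Rightarrow>
    ('o \<Rightarrow> 'v set) \<Rightarrow> ('o \<Rightarrow> real) \<Rightarrow> 'o set \<Rightarrow> 'o \<Rightarrow> 'v set" where
  "voronoi_cell V E w loc rad F p0 =
     {v\<in>V. \<forall>p\<in>F. set_dist V E w {v} (loc p0) - rad p0 \<le> set_dist V E w {v} (loc p) - rad p}"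

definition shortest_path_to :: "'v set \<Rightarrow> ('v \<times> 'v) set \<Rightarrow> ('v \<Rightarrow> 'v \<Rightarrow> real) \<Rightarrow>
    'v \<Rightarrow> 'v set \<Rightarrow> 'v list \<Rightarrow> bool" where
  "shortest_path_to V E w v X P \<longleftrightarrow>
     P \<in> walks_between V E {v} X \<and> walk_weight w P = set_dist V E w {v} X"

definition generic :: "'v set \<Rightarrow> ('v \<times> 'v) set \<Rightarrow> ('v \<Rightarrow> 'v \<Rightarrow> real) \<Rightarrow>
    ('o \<Rightarrow> real) \<Rightarrow> 'o set \<Rightarrow> bool" where
  "generic V E w rad Obj \<longleftrightarrow>
     (\<forall>u\<in>V. \<forall>v\<in>V. \<forall>u'\<in>V. \<forall>v'\<in>V. u \<noteq> v \<longrightarrow> u' \<noteq> v' \<longrightarrow>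
        vdist V E w u v = vdist V E w u' v' \<longrightarrow> {u, v} = {u', v'}) \<and>
     (\<forall>u\<in>V. \<forall>v\<in>V. \<forall>u'\<in>V. \<forall>v'\<in>V. \<forall>p\<in>Obj. \<forall>p'\<in>Obj. (u \<noteq> v \<or> u' \<noteq> v') \<longrightarrow>
        vdist V E w u v - rad p = vdist V E w u' v' - rad p' \<longrightarrow> {u, v} = {u', v'} \<and> p = p') \<and>
     (\<forall>u\<in>V. \<forall>v\<in>V. \<exists>!P. P \<in> walks_between V E {u} {v} \<and> walk_weight w P = vdist V E w u v)"

end

theory Submission imports Defs begin

lemma ww_single[simp]: "walk_weight w [x] = 0" by (simp add: walk_weight_def)
lemma ww_cons2[simp]: "walk_weight w (x # y # zs) = w x y + walk_weight w (y # zs)"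
  unfolding walk_weight_def by (simp del: sum.lessThan_Suc add: sum.lessThan_Suc_shift)

lemma ww_append: "P \<noteq> [] \<Longrightarrow> Q \<noteq> [] \<Longrightarrow> last P = hd Q \<Longrightarrow>
   walk_weight w (P @ tl Q) = walk_weight w P + walk_weight w Q"
proof (induct P rule: induct_list012)
  case (2 x) then show ?case by (cases Q) auto
next
  case (3 x y zs) then show ?case by simp
qed simp

lemma iw_single[simp]: "is_walk V E [x] \<longleftrightarrow> x \<in> V" by (simp add: is_walk_def)
lemma iw_cons2[simp]: "is_walk V E (x # y # zs) \<longleftrightarrow> x \<in> V \<and> (x,y) \<in> E \<and> is_walk V E (y # zs)"
  unfolding is_walk_def
  apply (auto simp: nth_Cons split: nat.splits)
  done

lemma iw_append: "is_walk V E P \<Longrightarrow> is_walk V E Q \<Longrightarrow> last P = hd Q \<Longrightarrow> is_walk V E (P @ tl Q)"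
proof (induct P rule: induct_list012)
  case 1 then show ?case by (simp add: is_walk_def)
next
  case (2 x) then show ?case by (cases Q) auto
next
  case (3 x y zs) then show ?case by simp
qed

lemma iw_ne: "is_walk V E P \<Longrightarrow> P \<noteq> []" by (simp add: is_walk_def)


lemma iw_take: "is_walk V E P \<Longrightarrow> i < length P \<Longrightarrow> is_walk V E (take (Suc i) P)"
  unfolding is_walk_def by (auto dest: in_set_takeD)
lemma iw_drop: "is_walk V E P \<Longrightarrow> i < length P \<Longrightarrow> is_walk V E (drop i P)"
  unfolding is_walk_def by (auto dest: in_set_dropD)

lemma iw_rev: "wgraph V E w \<Longrightarrow> is_walk V E P \<Longrightarrow> is_walk V E (rev P)"
proof (induct P rule: induct_list012)
  case (3 x y zs)
  have "is_walk V E (rev (y # zs) @ tl [y, x])"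
    by (rule iw_append) (use 3 in \<open>auto simp: wgraph_def\<close>)
  then show ?case by simp
qed auto

lemma cat: "P \<noteq> [] \<Longrightarrow> Q \<noteq> [] \<Longrightarrow> last P = hd Q \<Longrightarrow>
  hd (P @ tl Q) = hd P \<and> last (P @ tl Q) = last Q \<and> set (P @ tl Q) \<subseteq> set P \<union> set Q"
  by (cases Q) (auto simp: last_append split: if_splits)

lemma ww_rev: "wgraph V E w \<Longrightarrow> is_walk V E P \<Longrightarrow> walk_weight w (rev P) = walk_weight w P"
proof (induct P rule: induct_list012)
  case (3 x y zs)
  have yx: "w y x = w x y" using 3 by (auto simp: wgraph_def)
  have "walk_weight w (rev (y # zs) @ tl [y, x]) = walk_weight w (rev (y # zs)) + walk_weight w [y, x]"
    by (rule ww_append) auto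
  then show ?case using 3 yx by simp
qed auto

locale wg =
  fixes V :: "'v set" and E :: "('v \<times> 'v) set" and w :: "'v \<Rightarrow> 'v \<Rightarrow> real"
  assumes wg: "wgraph V E w"
    and conn: "graph_connected V E"
    and uniq: "\<forall>u\<in>V. \<forall>v\<in>V. \<exists>!P. P \<in> walks_between V E {u} {v} \<and> walk_weight w P = set_dist V E w {u} {v}"
begin

lemma finV: "finite V" using wg by (simp add: wgraph_def)

lemma edge_pos: "is_walk V E P \<Longrightarrow> i < length P - 1 \<Longrightarrow> w (P ! i) (P ! Suc i) > 0"
proof -
  assume a: "is_walk V E P" "i < length P - 1"
  then have "(P ! i, P ! Suc i) \<in> E" unfolding is_walk_def by auto
  then show ?thesis using wg unfolding wgraph_def by blast
qed

lemma ww_nonneg: "is_walk V E P \<Longrightarrow> walk_weight w P \<ge> 0"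
  unfolding walk_weight_def by (rule sum_nonneg) (simp add: edge_pos less_imp_le)

lemma ww_pos: "is_walk V E P \<Longrightarrow> length P \<ge> 2 \<Longrightarrow> walk_weight w P > 0"
  unfolding walk_weight_def by (rule sum_pos) (auto simp: edge_pos lessThan_empty_iff)

lemma bdd: "bdd_below (walk_weight w ` walks_between V E X Y)"
  by (rule bdd_belowI[of _ 0]) (auto simp: walks_between_def intro: ww_nonneg)

lemma dist_le: "P \<in> walks_between V E X Y \<Longrightarrow> set_dist V E w X Y \<le> walk_weight w P"
  unfolding set_dist_def by (rule cInf_lower) (auto intro: bdd)

lemma dist_ge: "walks_between V E X Y \<noteq> {} \<Longrightarrow> (\<And>P. P \<in> walks_between V E X Y \<Longrightarrow> c \<le> walk_weight w P)
   \<Longrightarrow> c \<le> set_dist V E w X Y"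
  unfolding set_dist_def by (rule cInf_greatest) auto

lemma vmin: "u \<in> V \<Longrightarrow> v \<in> V \<Longrightarrow> \<exists>P. P \<in> walks_between V E {u} {v} \<and> walk_weight w P = set_dist V E w {u} {v}"
proof -
  assume u: "u \<in> V" and v: "v \<in> V"
  show ?thesis using bspec[OF bspec[OF uniq u] v] by (rule ex1_implies_ex)
qed

lemma walks_ne: "u \<in> V \<Longrightarrow> x \<in> X \<Longrightarrow> x \<in> V \<Longrightarrow> walks_between V E {u} X \<noteq> {}"
proof -
  assume u: "u \<in> V" and x: "x \<in> X" "x \<in> V"
  have "walks_between V E {u} {x} \<noteq> {}" using conn u x unfolding graph_connected_def by simp
  then obtain P where "P \<in> walks_between V E {u} {x}" by blast
  then have "P \<in> walks_between V E {u} X" using x by (simp add: walks_between_def)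
  then show ?thesis by blast
qed

lemma sp_exists:
  assumes v: "v \<in> V" and X: "X \<subseteq> V" "X \<noteq> {}"
  shows "\<exists>P. shortest_path_to V E w v X P"
proof -
  let ?f = "\<lambda>x. set_dist V E w {v} {x}"
  have fX: "finite X" using X finV finite_subset by blast
  define x where "x = arg_min_on ?f X"
  have xX: "x \<in> X" unfolding x_def by (rule arg_min_if_finite(1)[OF fX X(2)])
  have xmin: "?f x \<le> ?f y" if "y \<in> X" for y
  proof -
    have "\<not> ?f y < ?f x" using arg_min_if_finite(2)[OF fX X(2), of ?f] that unfolding x_def by blast
    then show ?thesis by linarith
  qed
  obtain P where P: "P \<in> walks_between V E {v} {x}" "walk_weight w P = ?f x"
    using vmin[OF v, of x] xX X by blast
  have PX: "P \<in> walks_between V E {v} X" using P xX by (auto simp: walks_between_def)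
  have "set_dist V E w {v} X \<le> walk_weight w P" by (rule dist_le[OF PX])
  moreover have "walk_weight w P \<le> set_dist V E w {v} X"
  proof (rule dist_ge)
    show "walks_between V E {v} X \<noteq> {}" using PX by blast
  next
    fix Q assume Q: "Q \<in> walks_between V E {v} X"
    then have "Q \<in> walks_between V E {v} {last Q}" by (auto simp: walks_between_def)
    then have "?f (last Q) \<le> walk_weight w Q" by (rule dist_le)
    moreover have "?f x \<le> ?f (last Q)" using Q xmin by (auto simp: walks_between_def)
    ultimately show "walk_weight w P \<le> walk_weight w Q" using P by simp
  qed
  ultimately show ?thesis using PX unfolding shortest_path_to_def by auto
qed

lemma triangle:
  assumes v: "v \<in> V" and u: "u \<in> V" and X: "X \<subseteq> V" "X \<noteq> {}"
  shows "set_dist V E w {v} X \<le> set_dist V E w {v} {u} + set_dist V E w {u} X"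
proof -
  obtain A where A: "A \<in> walks_between V E {v} {u}" "walk_weight w A = set_dist V E w {v} {u}"
    using vmin[OF v u] by blast
  obtain B where B: "shortest_path_to V E w u X B" using sp_exists[OF u X] by blast
  have wA: "is_walk V E A" "hd A = v" "last A = u" using A by (auto simp: walks_between_def)
  have wB: "is_walk V E B" "hd B = u" "last B \<in> X" "walk_weight w B = set_dist V E w {u} X"
    using B by (auto simp: walks_between_def shortest_path_to_def)
  have "A @ tl B \<in> walks_between V E {v} X"
    unfolding walks_between_def using wA wB iw_append[of V E A B] iw_ne[of V E A] iw_ne[of V E B]
    by (cases B) (auto simp: hd_append last_append split: if_splits)
  from dist_le[OF this] show ?thesis
    using ww_append[of A B w] wA wB A iw_ne[of V E A] iw_ne[of V E B] by simp
qed

lemma split: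
  assumes P: "shortest_path_to V E w v X P" and i: "i < length P"
  shows "set_dist V E w {v} {P ! i} + set_dist V E w {P ! i} X \<le> set_dist V E w {v} X"
proof -
  have wP: "is_walk V E P" "hd P = v" "last P \<in> X" "walk_weight w P = set_dist V E w {v} X"
    using P by (auto simp: walks_between_def shortest_path_to_def)
  have lt: "last (take (Suc i) P) = P ! i" using i by (simp add: take_Suc_conv_app_nth)
  have ht: "hd (take (Suc i) P) = v" using wP by simp
  have t: "take (Suc i) P \<in> walks_between V E {v} {P ! i}"
    unfolding walks_between_def using lt ht iw_take[OF wP(1) i] by simp
  have d: "drop i P \<in> walks_between V E {P ! i} X"
    unfolding walks_between_def using wP i iw_drop[OF wP(1) i]
    by (simp add: hd_drop_conv_nth)
  have "tl (drop i P) = drop (Suc i) P" by (simp add: drop_Suc tl_drop)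
  then have eq: "take (Suc i) P @ tl (drop i P) = P" by simp
  have "walk_weight w P = walk_weight w (take (Suc i) P) + walk_weight w (drop i P)"
    using ww_append[of "take (Suc i) P" "drop i P" w] eq i t d iw_ne[OF wP(1)]
    by (auto simp: walks_between_def)
  with dist_le[OF t] dist_le[OF d] wP show ?thesis by simp
qed

end


theorem lemma4p2:
  fixes V :: "'v set" and E :: "('v \<times> 'v) set" and w :: "'v \<Rightarrow> 'v \<Rightarrow> real"
    and loc :: "'o \<Rightarrow> 'v set" and rad :: "'o \<Rightarrow> real" and Obj F :: "'o set"
  assumes "wgraph V E w" and "graph_connected V E"
    and "\<And>p. p \<in> Obj \<Longrightarrow> induces_connected V E (loc p) \<and> rad p \<ge> 0"
    and "generic V E w rad Obj"
    and "F \<subseteq> Obj" and "normal_family V E w loc rad F"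
  shows "\<forall>p\<in>F. (\<forall>v\<in>voronoi_cell V E w loc rad F p.
             (\<exists>!P. shortest_path_to V E w v (loc p) P) \<and>
             (\<forall>P. shortest_path_to V E w v (loc p) P \<longrightarrow> set P \<subseteq> voronoi_cell V E w loc rad F p))
          \<and> induces_connected V E (voronoi_cell V E w loc rad F p)"
proof -
  have G: "(\<forall>u\<in>V. \<forall>v\<in>V. \<forall>u'\<in>V. \<forall>v'\<in>V. u \<noteq> v \<longrightarrow> u' \<noteq> v' \<longrightarrow>
        set_dist V E w {u} {v} = set_dist V E w {u'} {v'} \<longrightarrow> {u, v} = {u', v'}) \<and>
     (\<forall>u\<in>V. \<forall>v\<in>V. \<forall>u'\<in>V. \<forall>v'\<in>V. \<forall>p\<in>Obj. \<forall>p'\<in>Obj. (u \<noteq> v \<or> u' \<noteq> v') \<longrightarrow>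
        set_dist V E w {u} {v} - rad p = set_dist V E w {u'} {v'} - rad p' \<longrightarrow> {u, v} = {u', v'} \<and> p = p') \<and>
     (\<forall>u\<in>V. \<forall>v\<in>V. \<exists>!P. P \<in> walks_between V E {u} {v} \<and> walk_weight w P = set_dist V E w {u} {v})"
    using assms(4) unfolding generic_def .
  have gen1: "\<And>u v u' v'. u\<in>V \<Longrightarrow> v\<in>V \<Longrightarrow> u'\<in>V \<Longrightarrow> v'\<in>V \<Longrightarrow> u \<noteq> v \<Longrightarrow> u' \<noteq> v' \<Longrightarrow>
        set_dist V E w {u} {v} = set_dist V E w {u'} {v'} \<Longrightarrow> {u, v} = {u', v'}"
  proof -
    fix u v u' v' assume a: "u\<in>V" "v\<in>V" "u'\<in>V" "v'\<in>V" "u \<noteq> v" "u' \<noteq> v'"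
        "set_dist V E w {u} {v} = set_dist V E w {u'} {v'}"
    have "\<forall>u\<in>V. \<forall>v\<in>V. \<forall>u'\<in>V. \<forall>v'\<in>V. u \<noteq> v \<longrightarrow> u' \<noteq> v' \<longrightarrow>
        set_dist V E w {u} {v} = set_dist V E w {u'} {v'} \<longrightarrow> {u, v} = {u', v'}" using G by (rule conjunct1)
    from this[rule_format, OF a] show "{u, v} = {u', v'}" .
  qed
  have uniq: "\<forall>u\<in>V. \<forall>v\<in>V. \<exists>!P. P \<in> walks_between V E {u} {v} \<and> walk_weight w P = set_dist V E w {u} {v}"
    using G by (rule conjunct2[THEN conjunct2])
  interpret wg V E w by (rule wg.intro) (fact assms(1), fact assms(2), fact uniq)
  let ?d = "set_dist V E w"
  have locp: "loc q \<noteq> {} \<and> loc q \<subseteq> V \<and> induces_connected V E (loc q)" if qF: "q \<in> F" for q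
  proof -
    have ic: "induces_connected V E (loc q)" using assms(3)[OF subsetD[OF assms(5) qF]] by (rule conjunct1)
    then have "loc q \<noteq> {} \<and> loc q \<subseteq> V" unfolding induces_connected_def by (rule conjE) (erule conjE, intro conjI)
    then show ?thesis using ic by (intro conjI) auto
  qed
  have NF: "\<forall>p1\<in>F. \<forall>p2\<in>F. p1 \<noteq> p2 \<longrightarrow> loc p1 \<inter> loc p2 = {} \<and>
        set_dist V E w (loc p1) (loc p2) > rad p1 - rad p2"
    using assms(6) unfolding normal_family_def .
  show ?thesis
  proof
    fix p assume pF: "p \<in> F"
    define M where "M = voronoi_cell V E w loc rad F p"
    have Xp: "loc p \<noteq> {}" "loc p \<subseteq> V" using locp[OF pF] by auto
    have MV: "M \<subseteq> V" unfolding M_def voronoi_cell_def by auto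
    have LM: "loc p \<subseteq> M"
    proof
      fix x assume x: "x \<in> loc p"
      have xV: "x \<in> V" using x Xp by auto
      have x0: "?d {x} (loc p) \<le> 0"
        using dist_le[of "[x]" "{x}" "loc p"] x xV by (simp add: walks_between_def)
      have "?d {x} (loc p) - rad p \<le> ?d {x} (loc q) - rad q" if qF: "q \<in> F" for q
      proof (cases "q = p")
        case True then show ?thesis by simp
      next
        case False
        have n: "?d (loc q) (loc p) > rad q - rad p"
          using NF[rule_format, OF qF pF False] by (rule conjunct2)
        obtain y where y: "y \<in> loc q" using locp[OF qF] by blast
        have "?d (loc q) (loc p) \<le> ?d {x} (loc q)"
        proof (rule dist_ge)
          show "walks_between V E {x} (loc q) \<noteq> {}" using walks_ne[OF xV y] y locp[OF qF] by blast
        next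
          fix Q assume Q: "Q \<in> walks_between V E {x} (loc q)"
          then have Qw: "is_walk V E Q" by (simp add: walks_between_def)
          have "rev Q \<in> walks_between V E (loc q) (loc p)"
            using Q x iw_rev[OF assms(1) Qw] iw_ne[OF Qw] by (auto simp: walks_between_def hd_rev last_rev)
          from dist_le[OF this] show "?d (loc q) (loc p) \<le> walk_weight w Q"
            using ww_rev[OF assms(1) Qw] by simp
        qed
        then show ?thesis using n x0 by linarith
      qed
      then show "x \<in> M" unfolding M_def voronoi_cell_def using xV by simp
    qed
    have sub: "set P \<subseteq> M" if vM: "v \<in> M" and P: "shortest_path_to V E w v (loc p) P" for v P
    proof
      fix y assume "y \<in> set P"
      then obtain i where i: "i < length P" and yi: "y = P ! i" by (metis in_set_conv_nth)
      have vV: "v \<in> V" using vM MV by auto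
      have yV: "y \<in> V" using P \<open>y \<in> set P\<close> by (auto simp: shortest_path_to_def walks_between_def is_walk_def)
      have sp: "?d {v} {y} + ?d {y} (loc p) \<le> ?d {v} (loc p)" using split[OF P i] yi by simp
      have "?d {y} (loc p) - rad p \<le> ?d {y} (loc q) - rad q" if qF: "q \<in> F" for q
      proof -
        have "?d {v} (loc p) - rad p \<le> ?d {v} (loc q) - rad q"
          using vM qF unfolding M_def voronoi_cell_def by simp
        moreover have "?d {v} (loc q) \<le> ?d {v} {y} + ?d {y} (loc q)"
          using triangle[OF vV yV] locp[OF qF] by blast
        ultimately show ?thesis using sp by linarith
      qed
      then show "y \<in> M" unfolding M_def voronoi_cell_def using yV by simp
    qed
    have un: "P = Q" if P: "shortest_path_to V E w v (loc p) P" and Q: "shortest_path_to V E w v (loc p) Q"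
      and vV: "v \<in> V" for v P Q
    proof -
      have eqd: "?d {v} {last R} = ?d {v} (loc p) \<and> R \<in> walks_between V E {v} {last R}
           \<and> walk_weight w R = ?d {v} {last R} \<and> last R \<in> loc p \<and> last R \<in> V \<and> is_walk V E R \<and> hd R = v"
        if R: "shortest_path_to V E w v (loc p) R" for R
      proof -
        have Rw: "R \<in> walks_between V E {v} {last R}" "walk_weight w R = ?d {v} (loc p)" "last R \<in> loc p"
          "is_walk V E R" "hd R = v"
          using R by (auto simp: shortest_path_to_def walks_between_def)
        have lV: "last R \<in> V" using Rw Xp by auto
        obtain S where S: "S \<in> walks_between V E {v} {last R}" "walk_weight w S = ?d {v} {last R}"
          using vmin[OF vV lV] by blast
        have "S \<in> walks_between V E {v} (loc p)" using S Rw by (auto simp: walks_between_def)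
        from dist_le[OF this] have "?d {v} (loc p) \<le> ?d {v} {last R}" using S by simp
        moreover have "?d {v} {last R} \<le> ?d {v} (loc p)" using dist_le[OF Rw(1)] Rw by simp
        ultimately show ?thesis using Rw lV by auto
      qed
      note eP = eqd[OF P] and eQ = eqd[OF Q]
      have pos: "\<And>R. is_walk V E R \<Longrightarrow> hd R \<noteq> last R \<Longrightarrow> walk_weight w R > 0"
      proof -
        fix R assume R: "is_walk V E R" "hd R \<noteq> last R"
        have "length R \<noteq> 1" using R by (cases R) auto
        moreover have "R \<noteq> []" using iw_ne[OF R(1)] .
        ultimately have "length R \<ge> 2" by (cases R) (auto simp: Suc_le_eq)
        then show "walk_weight w R > 0" using ww_pos R by blast
      qed
      have vv: "?d {v} {v} \<le> 0" using dist_le[of "[v]" "{v}" "{v}"] vV by (simp add: walks_between_def)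
      have "last P = last Q"
      proof (rule ccontr)
        assume ne: "last P \<noteq> last Q"
        show False
        proof (cases "v = last P \<or> v = last Q")
          case True
          then show False
          proof
            assume "v = last P"
            then have "walk_weight w Q \<le> 0" using eP eQ vv by simp
            moreover have "walk_weight w Q > 0" using pos[of Q] eQ ne \<open>v = last P\<close> by auto
            ultimately show False by simp
          next
            assume "v = last Q"
            then have "walk_weight w P \<le> 0" using eP eQ vv by simp
            moreover have "walk_weight w P > 0" using pos[of P] eP ne \<open>v = last Q\<close> by auto
            ultimately show False by simp
          qed
        next
          case False
          have "{v, last P} = {v, last Q}"
            using gen1[of v "last P" v "last Q"] False vV eP eQ by auto
          then show False using ne False by (auto simp: doubleton_eq_iff)
        qed
      qed
      then have lq: "last Q \<in> V" "P \<in> walks_between V E {v} {last Q}" "walk_weight w P = ?d {v} {last Q}"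
        using eP eQ by simp_all
      obtain Z where "Z \<in> walks_between V E {v} {last Q} \<and> walk_weight w Z = ?d {v} {last Q}"
        and Zu: "\<forall>y. y \<in> walks_between V E {v} {last Q} \<and> walk_weight w y = ?d {v} {last Q} \<longrightarrow> y = Z"
        using bspec[OF bspec[OF uniq vV] lq(1)] by (rule ex1E)
      have "P = Z" using Zu lq by blast
      moreover have "Q = Z" using Zu eQ by blast
      ultimately show "P = Q" by simp
    qed
    have part1: "\<forall>v\<in>M. (\<exists>!P. shortest_path_to V E w v (loc p) P) \<and>
             (\<forall>P. shortest_path_to V E w v (loc p) P \<longrightarrow> set P \<subseteq> M)"
    proof (intro ballI conjI allI impI)
      fix v assume vM: "v \<in> M"
      then have vV: "v \<in> V" using MV by auto
      obtain P where P: "shortest_path_to V E w v (loc p) P" using sp_exists[OF vV Xp(2) Xp(1)] by blast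
      show "\<exists>!P. shortest_path_to V E w v (loc p) P"
      proof (rule ex1I)
        show "shortest_path_to V E w v (loc p) P" by (rule P)
      next
        fix Pa assume "shortest_path_to V E w v (loc p) Pa"
        then show "Pa = P" using un[OF _ P vV] by blast
      qed
    next
      fix v P assume "v \<in> M" "shortest_path_to V E w v (loc p) P"
      then show "set P \<subseteq> M" using sub by blast
    qed
    have part2: "induces_connected V E M"
      unfolding induces_connected_def
    proof (intro conjI ballI)
      show "M \<noteq> {}" using LM Xp by blast
      show "M \<subseteq> V" by (rule MV)
    next
      fix u v assume uM: "u \<in> M" and vM: "v \<in> M"
      have uV: "u \<in> V" and vV: "v \<in> V" using uM vM MV by auto
      obtain Pu where Pu: "shortest_path_to V E w u (loc p) Pu" using sp_exists[OF uV Xp(2) Xp(1)] by blast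
      obtain Pv where Pv: "shortest_path_to V E w v (loc p) Pv" using sp_exists[OF vV Xp(2) Xp(1)] by blast
      have wu: "is_walk V E Pu" "hd Pu = u" "last Pu \<in> loc p" "set Pu \<subseteq> M"
        using Pu sub[OF uM Pu] by (auto simp: shortest_path_to_def walks_between_def)
      have wv: "is_walk V E Pv" "hd Pv = v" "last Pv \<in> loc p" "set Pv \<subseteq> M"
        using Pv sub[OF vM Pv] by (auto simp: shortest_path_to_def walks_between_def)
      obtain C where C: "is_walk V E C" "hd C = last Pu" "last C = last Pv" "set C \<subseteq> loc p"
        using locp[OF pF] wu wv unfolding induces_connected_def by blast
      define R where "R = rev Pv"
      have wR: "is_walk V E R" "hd R = last Pv" "last R = v" "set R \<subseteq> M"
        unfolding R_def using iw_rev[OF assms(1) wv(1)] wv iw_ne[OF wv(1)]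
        by (auto simp: hd_rev last_rev)
      define A where "A = Pu @ tl C"
      have wA: "is_walk V E A" "hd A = u" "last A = last Pv" "set A \<subseteq> M"
        unfolding A_def using iw_append[OF wu(1) C(1)] cat[of Pu C] wu C iw_ne[OF wu(1)] iw_ne[OF C(1)] LM
        by auto
      define B where "B = A @ tl R"
      have wB: "is_walk V E B" "hd B = u" "last B = v" "set B \<subseteq> M"
        unfolding B_def using iw_append[OF wA(1) wR(1)] cat[of A R] wA wR iw_ne[OF wA(1)] iw_ne[OF wR(1)]
        by auto
      then show "\<exists>P. is_walk V E P \<and> hd P = u \<and> last P = v \<and> set P \<subseteq> M" by blast
    qed
    show "(\<forall>v\<in>voronoi_cell V E w loc rad F p.
             (\<exists>!P. shortest_path_to V E w v (loc p) P) \<and>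
             (\<forall>P. shortest_path_to V E w v (loc p) P \<longrightarrow> set P \<subseteq> voronoi_cell V E w loc rad F p))
          \<and> induces_connected V E (voronoi_cell V E w loc rad F p)"
      using part1 part2 unfolding M_def by blast
  qed
qed

end
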